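(* Let $\mathcal R_1,\mathcal R_2\subseteq\mathbb{N}_0^n\times\mathbb{N}_0^n$ be reaction networks on the same set of $n$ species, both without catalytic species. Then $\mathrm{cl}(\mathcal R_1)=\mathrm{cl}(\mathcal R_2)$ if and only if $\mathcal R_1(x)=\mathcal R_2(x)$ for all $x\in\mathbb{N}_0^n$.
   Context: A reaction network (RN) is a (possibly infinite) subset $\mathcal R\subseteq\mathbb{N}_0^n\times\mathbb{N}_0^n$ containing no element $(y,y')$ with $y=y'$; elements $(y,y')$ are reactions $y\to y'$. A reaction $y\to y'$ has a catalytic species if there is $i$ with $y^i>0$ and $(y')^i>0$; an RN is without catalytic species if none of its reactions has a catalytic species. For $r_1=(y_1,y_1'),\ r_2=(y_2,y_2')$ define $r_1\oplus r_2=(y_1+0\vee(y_2-y_1'),\ y_2'+0\vee(y_1'-y_2))$ ($\vee$ componentwise maximum); it is associative. For $A\subseteq\mathbb{N}_0^n\times\mathbb{N}_0^n$, $\mathrm{cl}(A)$ is the set of all finite $\oplus$-sums of elements of $A$, including the empty sum $(0,0)$. An ordered sequence of reactions $y_1\to y_1',\dots,y_m\to y_m'$ is active on $x\in\mathbb{N}_0^n$ if $x+\sum_{i=1}^{k-1}(y_i'-y_i)\ge y_k$ (componentwise) for all $k$. A state $x$ leads to $x'$ via $\mathcal R$ if there is an ordered sequence of $m\ge0$ reactions of $\mathcal R$ (repetitions allowed) active on $x$ with $x'=x+\sum_{i=1}^m(y_i'-y_i)$. $\mathcal R(x)$ denotes the set of states to which $x$ leads via $\mathcal R$. *)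

theory Defs
  imports Main
begin

type_synonym 'n state = "'n \<Rightarrow> nat"
type_synonym 'n reaction = "'n state \<times> 'n state"

definition is_RN :: "'n reaction set \<Rightarrow> bool" where
  "is_RN R \<longleftrightarrow> (\<forall>(y, y') \<in> R. y \<noteq> y')"

definition has_catalytic :: "'n reaction \<Rightarrow> bool" where
  "has_catalytic r \<longleftrightarrow> (\<exists>i. fst r i > 0 \<and> snd r i > 0)"

definition no_catalytic :: "'n reaction set \<Rightarrow> bool" where
  "no_catalytic R \<longleftrightarrow> (\<forall>r \<in> R. \<not> has_catalytic r)"

text \<open>r1 (+) r2; on nat, a - b is max 0 (a - b).\<close>
definition oplus :: "'n reaction \<Rightarrow> 'n reaction \<Rightarrow> 'n reaction" where
  "oplus r1 r2 = (\<lambda>i. fst r1 i + (fst r2 i - snd r1 i), \<lambda>i. snd r2 i + (snd r1 i - fst r2 i))"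

definition zero_reaction :: "'n reaction" where
  "zero_reaction = (\<lambda>_. 0, \<lambda>_. 0)"

definition cl :: "'n reaction set \<Rightarrow> 'n reaction set" where
  "cl A = {foldr oplus rs zero_reaction | rs. set rs \<subseteq> A}"

definition active :: "'n reaction list \<Rightarrow> 'n state \<Rightarrow> bool" where
  "active rs x \<longleftrightarrow> (\<forall>k < length rs. \<forall>i.
     int (x i) + (\<Sum>j<k. int (snd (rs ! j) i) - int (fst (rs ! j) i)) \<ge> int (fst (rs ! k) i))"

definition leads_to :: "'n reaction set \<Rightarrow> 'n state \<Rightarrow> 'n state \<Rightarrow> bool" where
  "leads_to R x x' \<longleftrightarrow> (\<exists>rs. set rs \<subseteq> R \<and> active rs x \<and>
     (\<forall>i. int (x' i) = int (x i) + (\<Sum>j<length rs. int (snd (rs ! j) i) - int (fst (rs ! j) i))))"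

definition reach :: "'n reaction set \<Rightarrow> 'n state \<Rightarrow> 'n state set" where
  "reach R x = {x'. leads_to R x x'}"

end

theory Submission
  imports Defs
begin

lemma oplus_assoc: "oplus (oplus a b) c = oplus a (oplus b c)"
proof -
  have h1: "(a1::nat) + (b1 - a2) + (c1 - (b2 + (a2 - b1))) = a1 + (b1 + (c1 - b2) - a2)"
    for a1 a2 b1 b2 c1 :: nat by arith
  have h2: "(c2::nat) + (b2 + (a2 - b1) - c1) = c2 + (b2 - c1) + (a2 - (b1 + (c1 - b2)))"
    for a2 b1 b2 c1 c2 :: nat by arith
  show ?thesis unfolding oplus_def
    by (simp only: fst_conv snd_conv prod.inject) (intro conjI ext h1 h2)
qed

lemma oplus_zero_left: "oplus zero_reaction w = w"
  by (simp add: oplus_def zero_reaction_def)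

lemma foldr_oplus: "foldr oplus xs w = oplus (foldr oplus xs zero_reaction) w"
  by (induction xs) (simp_all add: oplus_zero_left oplus_assoc)

lemma cl_oplus: "p \<in> cl A \<Longrightarrow> q \<in> cl A \<Longrightarrow> oplus p q \<in> cl A"
proof -
  assume "p \<in> cl A" "q \<in> cl A"
  then obtain xs ys where h: "set xs \<subseteq> A" "set ys \<subseteq> A"
    "p = foldr oplus xs zero_reaction" "q = foldr oplus ys zero_reaction"
    unfolding cl_def by blast
  have "foldr oplus (xs @ ys) zero_reaction = oplus p q"
    unfolding foldr_append h(3,4) o_def by (rule foldr_oplus)
  moreover have "set (xs @ ys) \<subseteq> A" using h by simp
  ultimately show ?thesis unfolding cl_def by (intro CollectI exI[of _ "xs @ ys"]) simp
qed

lemma cl_zero: "zero_reaction \<in> cl A"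
  unfolding cl_def by (intro CollectI exI[of _ "[]"]) simp

lemma cl_sub: "A' \<subseteq> cl A \<Longrightarrow> cl A' \<subseteq> cl A"
proof
  fix p assume A': "A' \<subseteq> cl A" and "p \<in> cl A'"
  then obtain rs where rs: "set rs \<subseteq> A'" "p = foldr oplus rs zero_reaction"
    unfolding cl_def by auto
  have "set rs \<subseteq> A' \<Longrightarrow> foldr oplus rs zero_reaction \<in> cl A" for rs
    by (induction rs) (use A' in \<open>auto intro: cl_oplus cl_zero\<close>)
  with rs show "p \<in> cl A" by simp
qed

lemma single_cl: "r \<in> A \<Longrightarrow> r \<in> cl A"
  unfolding cl_def by (intro CollectI exI[of _ "[r]"]) (simp add: oplus_def zero_reaction_def)

definition net :: "'n reaction list \<Rightarrow> 'n \<Rightarrow> int" where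
  "net rs i = (\<Sum>j<length rs. int (snd (rs ! j) i) - int (fst (rs ! j) i))"

lemma net_cons: "net (r#rs) i = int (snd r i) - int (fst r i) + net rs i"
  unfolding net_def by (simp del: sum.lessThan_Suc add: sum.lessThan_Suc_shift)

lemma sum_cons: "(\<Sum>j<Suc k. g ((r#rs)!j)) = g r + (\<Sum>j<k. g (rs!j))"
  by (subst sum.lessThan_Suc_shift) simp

lemma active_nil: "active [] x"
  by (simp add: active_def)

lemma active_cons: "active (r#rs) x \<longleftrightarrow> (\<forall>i. fst r i \<le> x i) \<and> active rs (\<lambda>i. x i - fst r i + snd r i)"
proof
  assume a: "active (r#rs) x"
  have h0: "\<forall>i. fst r i \<le> x i" using a[unfolded active_def, rule_format, of 0] by simp
  moreover have "active rs (\<lambda>i. x i - fst r i + snd r i)"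
    unfolding active_def
  proof (intro allI impI)
    fix k i assume "k < length rs"
    then have "int (x i) + (\<Sum>j<Suc k. int (snd ((r#rs) ! j) i) - int (fst ((r#rs) ! j) i)) \<ge> int (fst ((r#rs) ! Suc k) i)"
      using a[unfolded active_def, rule_format, of "Suc k" i] by simp
    then show "int (x i - fst r i + snd r i) + (\<Sum>j<k. int (snd (rs ! j) i) - int (fst (rs ! j) i)) \<ge> int (fst (rs ! k) i)"
      using h0[rule_format, of i]
      unfolding sum_cons[where g="\<lambda>p. int (snd p i) - int (fst p i)"] by (simp add: of_nat_diff)
  qed
  ultimately show "(\<forall>i. fst r i \<le> x i) \<and> active rs (\<lambda>i. x i - fst r i + snd r i)" by blast
next
  assume a: "(\<forall>i. fst r i \<le> x i) \<and> active rs (\<lambda>i. x i - fst r i + snd r i)"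
  show "active (r#rs) x"
    unfolding active_def
  proof (intro allI impI)
    fix k i assume k: "k < length (r#rs)"
    show "int (x i) + (\<Sum>j<k. int (snd ((r#rs) ! j) i) - int (fst ((r#rs) ! j) i)) \<ge> int (fst ((r#rs) ! k) i)"
    proof (cases k)
      case 0 then show ?thesis using a by simp
    next
      case (Suc k')
      then have "k' < length rs" using k by simp
      then have "int (x i - fst r i + snd r i) + (\<Sum>j<k'. int (snd (rs ! j) i) - int (fst (rs ! j) i)) \<ge> int (fst (rs ! k') i)"
        using a[THEN conjunct2, unfolded active_def, rule_format] by blast
      moreover have "fst r i \<le> x i" using a by blast
      ultimately show ?thesis
        unfolding Suc sum_cons[where g="\<lambda>p. int (snd p i) - int (fst p i)"] by (simp add: of_nat_diff trans_le_add1)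
    qed
  qed
qed

lemma foldr_sem:
  "(\<forall>x. active rs x \<longleftrightarrow> (\<forall>i. fst (foldr oplus rs zero_reaction) i \<le> x i)) \<and>
   (\<forall>i. int (snd (foldr oplus rs zero_reaction) i) - int (fst (foldr oplus rs zero_reaction) i) = net rs i)"
proof (induction rs)
  case Nil then show ?case by (simp add: active_nil zero_reaction_def net_def)
next
  case (Cons r rs)
  obtain z z' where zz: "foldr oplus rs zero_reaction = (z, z')" by fastforce
  obtain a a' where r: "r = (a, a')" by fastforce
  have IH1: "\<And>x. active rs x \<longleftrightarrow> (\<forall>i. z i \<le> x i)" and IH2: "\<And>i. int (z' i) - int (z i) = net rs i"
    using Cons zz by auto
  have f: "foldr oplus (r#rs) zero_reaction = (\<lambda>i. a i + (z i - a' i), \<lambda>i. z' i + (a' i - z i))"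
    using zz r by (simp add: oplus_def)
  have pw: "(a i \<le> x i \<and> z i \<le> x i - a i + a' i) \<longleftrightarrow> a i + (z i - a' i) \<le> x i" for i x
    by arith
  show ?case
  proof (intro conjI allI)
    fix x
    show "active (r # rs) x = (\<forall>i. fst (foldr oplus (r # rs) zero_reaction) i \<le> x i)"
      unfolding f active_cons IH1 by (simp add: r pw[symmetric] all_conj_distrib)
  next
    fix i
    show "int (snd (foldr oplus (r # rs) zero_reaction) i) - int (fst (foldr oplus (r # rs) zero_reaction) i) = net (r # rs) i"
      unfolding f net_cons using IH2[of i] by (simp add: r)
  qed
qed

lemma reach_char: "x' \<in> reach R x \<longleftrightarrow>
  (\<exists>p \<in> cl R. (\<forall>i. fst p i \<le> x i) \<and> (\<forall>i. int (x' i) = int (x i) - int (fst p i) + int (snd p i)))"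
proof
  assume "x' \<in> reach R x"
  then obtain rs where rs: "set rs \<subseteq> R" "active rs x" "\<forall>i. int (x' i) = int (x i) + net rs i"
    unfolding reach_def leads_to_def net_def by auto
  let ?p = "foldr oplus rs zero_reaction"
  have "?p \<in> cl R" using rs unfolding cl_def by auto
  then show "\<exists>p \<in> cl R. (\<forall>i. fst p i \<le> x i) \<and> (\<forall>i. int (x' i) = int (x i) - int (fst p i) + int (snd p i))"
    using foldr_sem[of rs] rs by (intro bexI[of _ ?p]) (auto simp: algebra_simps)
next
  assume "\<exists>p \<in> cl R. (\<forall>i. fst p i \<le> x i) \<and> (\<forall>i. int (x' i) = int (x i) - int (fst p i) + int (snd p i))"
  then obtain p where p: "p \<in> cl R" "\<forall>i. fst p i \<le> x i" "\<forall>i. int (x' i) = int (x i) - int (fst p i) + int (snd p i)"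
    by blast
  from p(1) obtain rs where rsp: "set rs \<subseteq> R" "p = foldr oplus rs zero_reaction"
    unfolding cl_def by blast
  have rs: "set rs \<subseteq> R"
    "\<forall>i. fst (foldr oplus rs zero_reaction) i \<le> x i"
    "\<forall>i. int (x' i) = int (x i) - int (fst (foldr oplus rs zero_reaction) i) + int (snd (foldr oplus rs zero_reaction) i)"
    using p rsp by auto
  then show "x' \<in> reach R x"
    unfolding reach_def leads_to_def using foldr_sem[of rs]
    by (intro CollectI exI[of _ rs]) (auto simp: net_def algebra_simps)
qed

lemma sub_cl:
  assumes nc: "no_catalytic R2" and eq: "\<forall>x. reach R1 x = reach R2 x"
  shows "R2 \<subseteq> cl R1"
proof
  fix r assume r: "r \<in> R2"
  have "snd r \<in> reach R2 (fst r)" unfolding reach_char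
    by (rule bexI[of _ r]) (auto intro: single_cl r)
  then have "snd r \<in> reach R1 (fst r)" using eq by simp
  then obtain p where p: "p \<in> cl R1" "\<forall>i. fst p i \<le> fst r i"
    "\<forall>i. int (snd r i) = int (fst r i) - int (fst p i) + int (snd p i)"
    unfolding reach_char by blast
  have nr: "\<forall>i. \<not> (fst r i > 0 \<and> snd r i > 0)"
    using nc r unfolding no_catalytic_def has_catalytic_def by blast
  have "fst p i = fst r i \<and> snd p i = snd r i" for i
    using p(2)[rule_format, of i] p(3)[rule_format, of i] nr[rule_format, of i] by linarith
  then have "p = r" by (simp add: prod_eq_iff fun_eq_iff)
  with p show "r \<in> cl R1" by simp
qed

theorem theorem3p5:
  fixes R1 R2 :: "('n::finite) reaction set"
  assumes "is_RN R1" and "is_RN R2"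
    and "no_catalytic R1" and "no_catalytic R2"
  shows "cl R1 = cl R2 \<longleftrightarrow> (\<forall>x. reach R1 x = reach R2 x)"
proof
  assume eq: "cl R1 = cl R2"
  show "\<forall>x. reach R1 x = reach R2 x"
  proof
    fix x
    show "reach R1 x = reach R2 x"
      by (rule set_eqI) (simp only: reach_char eq)
  qed
next
  assume e: "\<forall>x. reach R1 x = reach R2 x"
  have e': "\<forall>x. reach R2 x = reach R1 x"
  proof
    fix x show "reach R2 x = reach R1 x" using e by (rule allE) (rule sym)
  qed
  have "cl R2 \<subseteq> cl R1" by (rule cl_sub[OF sub_cl[OF assms(4) e]])
  moreover have "cl R1 \<subseteq> cl R2" by (rule cl_sub[OF sub_cl[OF assms(3) e']])
  ultimately show "cl R1 = cl R2" by (rule subset_antisym[rotated])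
qed

end
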